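(* Let $X:[0,S]\to\mathbb R$ be any function, $c>0$, $m_0\ge0$ an integer, and let $\Pi_n=\{t_0,\dots,t_n\}$ with $0\le t_0<t_1<\dots<t_n\le S$. Let $N_0\ge m_0$ be such that $J_m=\emptyset$ for all $m\ge N_0$, and let $N\ge N_0$, $N>m_0$. Then $$\sum_{i=1}^n(|X(t_i)-X(t_{i-1})|-c)_+\le V_1+V_2+W_1+W_2+\sum_{i=1}^n\sum_{s\in\{i-1,i\}}|X(t_s)-X(t_s^{N+1})|,$$ where $V_1=\sum_{m=0}^{m_0}\sum_{i\in J_m}\sum_{l=m+1}^{m_0}\sum_{s\in\{i-1,i\}}|X(t_s^l)-X(t_s^{l+1})|$, $W_1=\sum_{m=0}^{m_0}\sum_{i\in J_m}|X(t_i^{m+1})-X(t_{i-1}^{m+1})|$, $V_2=\sum_{m=0}^{\infty}\sum_{i\in J_m}\sum_{l=\bar m+1}^{N}\sum_{s\in\{i-1,i\}}\left(|X(t_s^l)-X(t_s^{l+1})|-2^{-l+\bar m}\frac c3\right)_+$, $W_2=\sum_{m=m_0+1}^{\infty}\sum_{i\in J_m}\left(|X(t_i^{m+1})-X(t_{i-1}^{m+1})|-\frac c3\right)_+$.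
   Context: Fix $S>0$, $q\in(0,1)$, $d(s,t)=|s-t|^q$ on $[0,S]$, and $r\ge4$. For $n\ge0$ let $T_n=\{kr^{-n/q}S:k=0,1,2,\dots\}\cap[0,S]$ and $\pi_n(t)=\max\{s\in T_n:s\le t\}$ for $t\in[0,S]$. For the partition $\Pi_n$ and $m=0,1,2,\dots$ let $J_m=\{i\in\{1,\dots,n\}:r^{-m-1}S^q<d(t_{i-1},t_i)\le r^{-m}S^q\}$. Given $N$, define $t_i^{N+1}=\pi_{N+1}(t_i)$ and recursively $t_i^l=\pi_l(t_i^{l+1})$ for $l=N,N-1,\dots,0$, $i=0,\dots,n$. Write $\bar m=\max\{m,m_0\}$ and $x_+=\max\{x,0\}$. *)

theory Defs
  imports Complex_Main
begin

definition dq :: "real \<Rightarrow> real \<Rightarrow> real \<Rightarrow> real" where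
  "dq q s u = \<bar>s - u\<bar> powr q"

definition Tgrid :: "real \<Rightarrow> real \<Rightarrow> real \<Rightarrow> nat \<Rightarrow> real set" where
  "Tgrid S q r n = {s. \<exists>k::nat. s = real k * r powr (- real n / q) * S} \<inter> {0..S}"

definition pig :: "real \<Rightarrow> real \<Rightarrow> real \<Rightarrow> nat \<Rightarrow> real \<Rightarrow> real" where
  "pig S q r n u = Max {s \<in> Tgrid S q r n. s \<le> u}"

definition Jset :: "real \<Rightarrow> real \<Rightarrow> real \<Rightarrow> nat \<Rightarrow> (nat \<Rightarrow> real) \<Rightarrow> nat \<Rightarrow> nat set" where
  "Jset S q r n t m = {i \<in> {1..n}.
      r powr (- real m - 1) * S powr q < dq q (t (i - 1)) (t i) \<and>
      dq q (t (i - 1)) (t i) \<le> r powr (- real m) * S powr q}"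

text \<open>Auxiliary chain: tchain ... i k = t_i^(N+1-k) for k \<le> N+1.\<close>
primrec tchain :: "real \<Rightarrow> real \<Rightarrow> real \<Rightarrow> nat \<Rightarrow> (nat \<Rightarrow> real) \<Rightarrow> nat \<Rightarrow> nat \<Rightarrow> real" where
  "tchain S q r N t i 0 = pig S q r (N + 1) (t i)"
| "tchain S q r N t i (Suc k) = pig S q r (N - k) (tchain S q r N t i k)"

text \<open>tpt ... l i = t_i^l (meaningful for l \<le> N+1): t_i^(N+1) = pi_(N+1)(t_i),
  t_i^l = pi_l(t_i^(l+1)).\<close>
definition tpt :: "real \<Rightarrow> real \<Rightarrow> real \<Rightarrow> nat \<Rightarrow> (nat \<Rightarrow> real) \<Rightarrow> nat \<Rightarrow> nat \<Rightarrow> real" where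
  "tpt S q r N t l i = tchain S q r N t i (N + 1 - l)"

end

theory Submission
  imports Defs
begin

lemma telescope:
  fixes f :: "nat \<Rightarrow> real"
  assumes "a \<le> b"
  shows "\<bar>f a - f b\<bar> \<le> (\<Sum>l=a..<b. \<bar>f l - f (Suc l)\<bar>)"
  using assms
proof (induction b)
  case 0 then show ?case by simp
next
  case (Suc b)
  show ?case
  proof (cases "a = Suc b")
    case True then show ?thesis by simp
  next
    case False
    then have "a \<le> b" using Suc.prems by simp
    then have "\<bar>f a - f (Suc b)\<bar> \<le> (\<Sum>l=a..<b. \<bar>f l - f (Suc l)\<bar>) + \<bar>f b - f (Suc b)\<bar>"
      using Suc.IH by (smt (verit))
    also have "\<dots> = (\<Sum>l=a..<Suc b. \<bar>f l - f (Suc l)\<bar>)" using \<open>a \<le> b\<close> by simp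
    finally show ?thesis .
  qed
qed

lemma geom:
  assumes "k \<le> N"
  shows "(\<Sum>l=k+1..N. 2 powr (- real l + real k)) = 1 - 2 powr (real k - real N)"
  using assms
proof (induction N)
  case 0 then show ?case by simp
next
  case (Suc N)
  show ?case
  proof (cases "k = Suc N")
    case True then show ?thesis by simp
  next
    case False
    then have kN: "k \<le> N" using Suc.prems by simp
    have "(\<Sum>l=k+1..Suc N. 2 powr (- real l + real k)) = (\<Sum>l=k+1..N. 2 powr (- real l + real k)) + 2 powr (- real (Suc N) + real k)"
      using kN by (simp add: sum.cl_ivl_Suc del: of_nat_Suc)
    also have "\<dots> = 1 - 2 powr (real k - real N) + 2 powr (real k - real N - 1)"
    proof -
      have e: "- real (Suc N) + real k = real k - real N - 1" by simp
      show ?thesis using Suc.IH kN by (simp only: e)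
    qed
    also have "2 powr (real k - real N) = 2 * 2 powr (real k - real N - 1)"
      by (simp add: powr_diff)
    finally show ?thesis by (simp add: algebra_simps)
  qed
qed

lemma slack:
  fixes f :: "nat \<Rightarrow> real" and c :: real
  assumes "k \<le> N" "c > 0"
  shows "(\<Sum>l=k+1..N. \<bar>f l\<bar>) \<le> (\<Sum>l=k+1..N. max (\<bar>f l\<bar> - 2 powr (- real l + real k) * (c/3)) 0) + c/3"
proof -
  have "(\<Sum>l=k+1..N. \<bar>f l\<bar>) \<le> (\<Sum>l=k+1..N. max (\<bar>f l\<bar> - 2 powr (- real l + real k) * (c/3)) 0 + 2 powr (- real l + real k) * (c/3))"
    by (intro sum_mono) linarith
  also have "\<dots> = (\<Sum>l=k+1..N. max (\<bar>f l\<bar> - 2 powr (- real l + real k) * (c/3)) 0) + (\<Sum>l=k+1..N. 2 powr (- real l + real k)) * (c/3)"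
    by (simp add: sum.distrib sum_distrib_right)
  finally have A: "(\<Sum>l=k+1..N. \<bar>f l\<bar>) \<le> (\<Sum>l=k+1..N. max (\<bar>f l\<bar> - 2 powr (- real l + real k) * (c/3)) 0) + (\<Sum>l=k+1..N. 2 powr (- real l + real k)) * (c/3)" .
  have "(\<Sum>l=k+1..N. 2 powr (- real l + real k)) \<le> 1"
    using geom[OF assms(1)] by simp
  then have "(\<Sum>l=k+1..N. 2 powr (- real l + real k)) * (c/3) \<le> c/3"
    using assms(2) by (simp add: mult_left_le_one_le)
  then show ?thesis using A by linarith
qed


lemma pair_sum:
  fixes h :: "nat \<Rightarrow> real"
  assumes "i \<ge> 1"
  shows "(\<Sum>s\<in>{i - 1, i}. h s) = h (i - 1) + h i"
  using assms by simp

lemma split_tel: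
  fixes g :: "nat \<Rightarrow> real"
  assumes "m \<le> m0" "m0 \<le> N"
  shows "(\<Sum>l=m+1..N. g l) = (\<Sum>l=m+1..m0. g l) + (\<Sum>l=m0+1..N. g l)"
proof -
  have "(\<Sum>l=m+1..<Suc m0. g l) + (\<Sum>l=Suc m0..<Suc N. g l) = (\<Sum>l=m+1..<Suc N. g l)"
    by (rule sum.atLeastLessThan_concat) (use assms in auto)
  then show ?thesis by (simp add: atLeastLessThanSuc_atLeastAtMost)
qed

lemma tel2:
  fixes f :: "nat \<Rightarrow> real"
  assumes "m \<le> N"
  shows "\<bar>f (m+1) - f (N+1)\<bar> \<le> (\<Sum>l=m+1..N. \<bar>f l - f (l+1)\<bar>)"
  using telescope[of "m+1" "N+1" f] assms by (simp add: atLeastLessThanSuc_atLeastAtMost)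

lemma per_i:
  fixes F :: "nat \<Rightarrow> nat \<Rightarrow> real" and Y :: "nat \<Rightarrow> real" and c :: real
  assumes mN: "m \<le> N" and m0N: "m0 \<le> N" and c: "c > 0" and i: "i \<ge> 1"
  shows "max (\<bar>Y i - Y (i - 1)\<bar> - c) 0 \<le>
      (\<Sum>l=m+1..m0. \<Sum>s\<in>{i - 1, i}. \<bar>F l s - F (l + 1) s\<bar>)
    + (\<Sum>l=max m m0 + 1..N. \<Sum>s\<in>{i - 1, i}.
           max (\<bar>F l s - F (l + 1) s\<bar> - 2 powr (- real l + real (max m m0)) * (c / 3)) 0)
    + (if m \<le> m0 then \<bar>F (m + 1) i - F (m + 1) (i - 1)\<bar> else 0)
    + (if m \<ge> m0 + 1 then max (\<bar>F (m + 1) i - F (m + 1) (i - 1)\<bar> - c / 3) 0 else 0)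
    + (\<Sum>s\<in>{i - 1, i}. \<bar>Y s - F (N + 1) s\<bar>)"
    (is "_ \<le> ?A + ?B + ?C + ?D + ?E")
proof -
  define w where "w = \<bar>F (m + 1) i - F (m + 1) (i - 1)\<bar>"
  define tel where "tel s = (\<Sum>l=m+1..N. \<bar>F l s - F (l + 1) s\<bar>)" for s
  have T: "\<bar>F (m+1) s - F (N+1) s\<bar> \<le> tel s" for s
    unfolding tel_def using tel2[OF mN, of "\<lambda>l. F l s"] by simp
  have E: "?E = \<bar>Y (i - 1) - F (N + 1) (i - 1)\<bar> + \<bar>Y i - F (N + 1) i\<bar>"
    using pair_sum[OF i] by simp
  have main: "\<bar>Y i - Y (i - 1)\<bar> \<le> ?E + tel i + tel (i - 1) + w"
    using T[of i] T[of "i - 1"] E unfolding w_def by linarith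
  have Anonneg: "?A \<ge> 0" by (intro sum_nonneg) auto
  have Bnonneg: "?B \<ge> 0" by (intro sum_nonneg) auto
  have Cnonneg: "?C \<ge> 0" by auto
  have Dnonneg: "?D \<ge> 0" by auto
  have Enonneg: "?E \<ge> 0" by (intro sum_nonneg) auto
  have bnd: "\<bar>Y i - Y (i - 1)\<bar> \<le> ?A + ?B + ?C + ?D + ?E + c"
  proof (cases "m \<le> m0")
    case True
    define B1 where "B1 s = (\<Sum>l=m0+1..N. max (\<bar>F l s - F (l + 1) s\<bar> - 2 powr (- real l + real m0) * (c / 3)) 0)" for s
    define A1 where "A1 s = (\<Sum>l=m+1..m0. \<bar>F l s - F (l + 1) s\<bar>)" for s
    have ts: "tel s \<le> A1 s + B1 s + c/3" for s
    proof -
      have "tel s = A1 s + (\<Sum>l=m0+1..N. \<bar>F l s - F (l + 1) s\<bar>)"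
        unfolding tel_def A1_def by (rule split_tel[OF True m0N])
      also have "(\<Sum>l=m0+1..N. \<bar>F l s - F (l + 1) s\<bar>) \<le> B1 s + c/3"
        unfolding B1_def using slack[OF m0N c, of "\<lambda>l. F l s - F (l + 1) s"] by simp
      finally show ?thesis by simp
    qed
    have mx: "max m m0 = m0" using True by simp
    have A: "?A = A1 (i - 1) + A1 i"
      unfolding A1_def using pair_sum[OF i] by (simp add: sum.distrib)
    have B: "?B = B1 (i - 1) + B1 i"
      unfolding B1_def mx using pair_sum[OF i] by (simp add: sum.distrib)
    have C: "?C = w" using True w_def by simp
    show ?thesis using main ts[of i] ts[of "i - 1"] A B C Dnonneg c by linarith
  next
    case False
    define B1 where "B1 s = (\<Sum>l=m+1..N. max (\<bar>F l s - F (l + 1) s\<bar> - 2 powr (- real l + real m) * (c / 3)) 0)" for s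
    have ts: "tel s \<le> B1 s + c/3" for s
      unfolding tel_def B1_def using slack[OF mN c, of "\<lambda>l. F l s - F (l + 1) s"] by simp
    have mx: "max m m0 = m" using False by simp
    have B: "?B = B1 (i - 1) + B1 i"
      unfolding B1_def mx using pair_sum[OF i] by (simp add: sum.distrib)
    have D: "?D = max (w - c/3) 0" using False w_def by simp
    have C: "?C = 0" using False by simp
    show ?thesis using main ts[of i] ts[of "i - 1"] B C D Anonneg c by linarith
  qed
  show ?thesis using bnd Anonneg Bnonneg Cnonneg Dnonneg Enonneg by linarith
qed

lemma exists_m:
  fixes d K r :: real
  assumes "0 < d" "d \<le> K" "r > 1"
  shows "\<exists>m::nat. r powr (- real m - 1) * K < d \<and> d \<le> r powr (- real m) * K"
proof -
  define P where "P n \<longleftrightarrow> r powr (- real n) * K < d" for n :: nat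
  have rp: "r powr (- real n) = inverse (r ^ n)" for n
    using assms(3) by (simp add: powr_minus powr_realpow)
  obtain n where n: "K / d < r ^ n" using real_arch_pow[OF assms(3)] by blast
  have "P n"
  proof -
    have "0 < r ^ n" using assms(3) by simp
    from n have "K < d * r ^ n" using assms(1) by (simp add: divide_less_eq mult.commute)
    then have "K / r ^ n < d" using \<open>0 < r ^ n\<close> by (simp add: divide_less_eq mult.commute)
    then show ?thesis unfolding P_def rp by (simp add: divide_inverse mult.commute)
  qed
  define n0 where "n0 = (LEAST n. P n)"
  have Pn0: "P n0" unfolding n0_def by (rule LeastI[of P n, OF \<open>P n\<close>])
  have "n0 \<noteq> 0" proof assume "n0 = 0" then show False using Pn0 assms(2,3) unfolding P_def by simp qed
  then obtain m where m: "n0 = Suc m" by (cases n0) auto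
  have "\<not> P m" unfolding n0_def[symmetric] using not_less_Least[of m P] m n0_def by auto
  moreover have "- real n0 = - real m - 1" using m by simp
  ultimately show ?thesis using Pn0 unfolding P_def by (intro exI[of _ m]) auto
qed


theorem lemma1:
  fixes S q r c :: real and m0 N0 N n :: nat
    and X :: "real \<Rightarrow> real" and t :: "nat \<Rightarrow> real"
  assumes "S > 0" and "0 < q" and "q < 1" and "r \<ge> 4" and "c > 0"
    and "0 \<le> t 0" and "\<forall>i<n. t i < t (Suc i)" and "t n \<le> S"
    and "N0 \<ge> m0" and "\<forall>m\<ge>N0. Jset S q r n t m = {}"
    and "N \<ge> N0" and "N > m0"
  shows "(\<Sum>i=1..n. max (\<bar>X (t i) - X (t (i - 1))\<bar> - c) 0)
    \<le> (\<Sum>m=0..m0. \<Sum>i\<in>Jset S q r n t m. \<Sum>l=m+1..m0. \<Sum>s\<in>{i - 1, i}.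
           \<bar>X (tpt S q r N t l s) - X (tpt S q r N t (l + 1) s)\<bar>)
     + (\<Sum>m. \<Sum>i\<in>Jset S q r n t m. \<Sum>l=max m m0 + 1..N. \<Sum>s\<in>{i - 1, i}.
           max (\<bar>X (tpt S q r N t l s) - X (tpt S q r N t (l + 1) s)\<bar>
                - 2 powr (- real l + real (max m m0)) * (c / 3)) 0)
     + (\<Sum>m=0..m0. \<Sum>i\<in>Jset S q r n t m.
           \<bar>X (tpt S q r N t (m + 1) i) - X (tpt S q r N t (m + 1) (i - 1))\<bar>)
     + (\<Sum>m. if m \<ge> m0 + 1 then (\<Sum>i\<in>Jset S q r n t m.
           max (\<bar>X (tpt S q r N t (m + 1) i) - X (tpt S q r N t (m + 1) (i - 1))\<bar> - c / 3) 0)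
         else 0)
     + (\<Sum>i=1..n. \<Sum>s\<in>{i - 1, i}. \<bar>X (t s) - X (tpt S q r N t (N + 1) s)\<bar>)"
proof -
  define J where "J = Jset S q r n t"
  define F where "F = (\<lambda>l s. X (tpt S q r N t l s))"
  define Y where "Y = (\<lambda>s. X (t s))"
  define a where "a m i = (\<Sum>l=m+1..m0. \<Sum>s\<in>{i - 1, i}. \<bar>F l s - F (l + 1) s\<bar>)" for m i
  define b where "b m i = (\<Sum>l=max m m0 + 1..N. \<Sum>s\<in>{i - 1, i}.
           max (\<bar>F l s - F (l + 1) s\<bar> - 2 powr (- real l + real (max m m0)) * (c / 3)) 0)" for m i
  define cc where "cc m i = (if m \<le> m0 then \<bar>F (m + 1) i - F (m + 1) (i - 1)\<bar> else 0)" for m i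
  define dd where "dd m i = (if m \<ge> m0 + 1 then max (\<bar>F (m + 1) i - F (m + 1) (i - 1)\<bar> - c / 3) 0 else 0)" for m i
  define E where "E i = (\<Sum>s\<in>{i - 1, i}. \<bar>Y s - F (N + 1) s\<bar>)" for i
  define G where "G m i = a m i + b m i + cc m i + dd m i" for m i
  have Gnn: "G m i \<ge> 0" for m i
    unfolding G_def a_def b_def cc_def dd_def by (intro add_nonneg_nonneg sum_nonneg) auto
  have finJ: "finite (J m)" for m
    unfolding J_def Jset_def by auto
  have Jsub: "J m \<subseteq> {1..n}" for m
    unfolding J_def Jset_def by auto
  have Jempty: "J m = {}" if "m > N" for m
    using assms(10,11) that unfolding J_def by auto
  have mono: "t j \<le> t k" if "j \<le> k" "k \<le> n" for j k
    using that
  proof (induction k)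
    case 0 then show ?case by simp
  next
    case (Suc k)
    show ?case
    proof (cases "j = Suc k")
      case True then show ?thesis by simp
    next
      case False
      then have "t j \<le> t k" using Suc by simp
      moreover have "t k < t (Suc k)" using assms(7) Suc.prems by simp
      ultimately show ?thesis by simp
    qed
  qed
  have cover: "\<exists>m. i \<in> J m \<and> m \<le> N" if i: "i \<in> {1..n}" for i
  proof -
    have lt: "t (i - 1) < t i" using assms(7) i by (metis Suc_diff_1 atLeastAtMost_iff diff_less less_le_trans zero_less_one)
    have "0 \<le> t (i - 1)" using mono[of 0 "i - 1"] assms(6) i by force
    moreover have "t i \<le> S" using mono[of i n] assms(8) i by simp
    ultimately have le: "t i - t (i - 1) \<le> S" by simp
    define d where "d = dq q (t (i - 1)) (t i)"
    have deq: "d = (t i - t (i - 1)) powr q" unfolding d_def dq_def using lt by simp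
    have d0: "0 < d" unfolding deq using lt by simp
    have dK: "d \<le> S powr q" unfolding deq using le lt assms(2) by (intro powr_mono2) auto
    obtain m :: nat where m: "r powr (- real m - 1) * S powr q < d" "d \<le> r powr (- real m) * S powr q"
      using exists_m[OF d0 dK, of r] assms(4) by force
    have "i \<in> J m" unfolding J_def Jset_def using i m d_def by auto
    moreover have "m \<le> N"
    proof (rule ccontr)
      assume "\<not> m \<le> N"
      then show False using Jempty \<open>i \<in> J m\<close> by auto
    qed
    ultimately show ?thesis by blast
  qed
  define mi where "mi i = (SOME m. i \<in> J m \<and> m \<le> N)" for i
  have mi: "i \<in> J (mi i) \<and> mi i \<le> N" if "i \<in> {1..n}" for i
    unfolding mi_def using someI_ex[OF cover[OF that]] .
  have step1: "(\<Sum>i=1..n. max (\<bar>Y i - Y (i - 1)\<bar> - c) 0) \<le> (\<Sum>i=1..n. G (mi i) i + E i)"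
  proof (rule sum_mono)
    fix i assume i: "i \<in> {1..n}"
    have "mi i \<le> N" using mi[OF i] by simp
    then show "max (\<bar>Y i - Y (i - 1)\<bar> - c) 0 \<le> G (mi i) i + E i"
      unfolding G_def a_def b_def cc_def dd_def E_def
      by (rule per_i) (use i assms(5,12) in auto)
  qed
  have step2: "(\<Sum>i=1..n. G (mi i) i) \<le> (\<Sum>m\<in>{..N}. \<Sum>i\<in>J m. G m i)"
  proof -
    have inj: "inj_on (\<lambda>i. (mi i, i)) {1..n}" by (auto intro: inj_onI)
    have "(\<Sum>i=1..n. G (mi i) i) = (\<Sum>p\<in>(\<lambda>i. (mi i, i)) ` {1..n}. case_prod G p)"
      by (subst sum.reindex[OF inj]) simp
    also have "\<dots> \<le> (\<Sum>p\<in>Sigma {..N} J. case_prod G p)"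
    proof (rule sum_mono2)
      show "finite (Sigma {..N} J)" using finJ by auto
      show "(\<lambda>i. (mi i, i)) ` {1..n} \<subseteq> Sigma {..N} J" using mi by auto
      show "\<And>p. p \<in> Sigma {..N} J - (\<lambda>i. (mi i, i)) ` {1..n} \<Longrightarrow> 0 \<le> case_prod G p"
        using Gnn by auto
    qed
    also have "\<dots> = (\<Sum>m\<in>{..N}. \<Sum>i\<in>J m. G m i)"
      by (rule sum.Sigma[symmetric]) (use finJ in auto)
    finally show ?thesis .
  qed
  have s_a: "(\<Sum>m\<in>{..N}. \<Sum>i\<in>J m. a m i) = (\<Sum>m=0..m0. \<Sum>i\<in>J m. a m i)"
    by (rule sum.mono_neutral_right) (use assms(12) in \<open>auto simp: a_def\<close>)
  have s_c: "(\<Sum>m\<in>{..N}. \<Sum>i\<in>J m. cc m i) = (\<Sum>m=0..m0. \<Sum>i\<in>J m. \<bar>F (m + 1) i - F (m + 1) (i - 1)\<bar>)"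
  proof -
    have "(\<Sum>m\<in>{..N}. \<Sum>i\<in>J m. cc m i) = (\<Sum>m=0..m0. \<Sum>i\<in>J m. cc m i)"
      by (rule sum.mono_neutral_right) (use assms(12) in \<open>auto simp: cc_def\<close>)
    also have "\<dots> = (\<Sum>m=0..m0. \<Sum>i\<in>J m. \<bar>F (m + 1) i - F (m + 1) (i - 1)\<bar>)"
      by (intro sum.cong) (auto simp: cc_def)
    finally show ?thesis .
  qed
  have s_b: "(\<Sum>m\<in>{..N}. \<Sum>i\<in>J m. b m i) = (\<Sum>m. \<Sum>i\<in>J m. b m i)"
    by (rule suminf_finite[symmetric]) (use Jempty in auto)
  have s_d: "(\<Sum>m\<in>{..N}. \<Sum>i\<in>J m. dd m i) = (\<Sum>m. if m \<ge> m0 + 1 then (\<Sum>i\<in>J m.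
           max (\<bar>F (m + 1) i - F (m + 1) (i - 1)\<bar> - c / 3) 0) else 0)"
  proof -
    have eq: "(\<Sum>i\<in>J m. dd m i) = (if m \<ge> m0 + 1 then (\<Sum>i\<in>J m.
           max (\<bar>F (m + 1) i - F (m + 1) (i - 1)\<bar> - c / 3) 0) else 0)" for m
      by (cases "m \<ge> m0 + 1") (auto simp: dd_def)
    show ?thesis unfolding eq
      by (rule suminf_finite[symmetric]) (use Jempty in auto)
  qed
  have step3: "(\<Sum>m\<in>{..N}. \<Sum>i\<in>J m. G m i) =
      (\<Sum>m\<in>{..N}. \<Sum>i\<in>J m. a m i) + (\<Sum>m\<in>{..N}. \<Sum>i\<in>J m. b m i)
      + (\<Sum>m\<in>{..N}. \<Sum>i\<in>J m. cc m i) + (\<Sum>m\<in>{..N}. \<Sum>i\<in>J m. dd m i)"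
    unfolding G_def by (simp add: sum.distrib)
  have "(\<Sum>i=1..n. max (\<bar>Y i - Y (i - 1)\<bar> - c) 0) \<le>
      (\<Sum>m=0..m0. \<Sum>i\<in>J m. a m i) + (\<Sum>m. \<Sum>i\<in>J m. b m i)
      + (\<Sum>m=0..m0. \<Sum>i\<in>J m. \<bar>F (m + 1) i - F (m + 1) (i - 1)\<bar>)
      + (\<Sum>m. if m \<ge> m0 + 1 then (\<Sum>i\<in>J m.
           max (\<bar>F (m + 1) i - F (m + 1) (i - 1)\<bar> - c / 3) 0) else 0)
      + (\<Sum>i=1..n. E i)"
    using step1 step2 step3 s_a s_b s_c s_d by (simp add: sum.distrib)
  then show ?thesis unfolding J_def F_def Y_def a_def b_def E_def .
qed

end
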